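(* Let $(E,\mathcal{E},m)$ be a $\sigma$-finite measure space and let $P$ be a stochastic operator on $L^1(E,\mathcal{E},m)$ which is uniquely mean ergodic with invariant density $f_*$. If a nonnegative measurable function $\tilde f_*$ is subinvariant for $P$ and $m(\operatorname{supp} f_*\cap\{x:\tilde f_*(x)<\infty\})>0$, then $\tilde f_*\in L^1$.
   Context: $L^1_+$ denotes the nonnegative elements of $L^1$, and $D(m)=\{f\in L^1_+:\|f\|=1\}$ is the set of densities. A linear operator $P$ on $L^1$ is stochastic if $P(D(m))\subseteq D(m)$. A substochastic (positive contraction) operator $P$ is extended to nonnegative measurable functions by $Pf=\sup_n Pf_n$ whenever $f=\sup_n f_n$ with $0\le f_n\le f_{n+1}$, $f_n\in L^1_+$ (the value may be $+\infty$). A nonnegative measurable $f$ is subinvariant for $P$ if $Pf\le f$. $P$ is uniquely mean ergodic if there is an invariant density $f_*$ ($Pf_*=f_*$) with $\lim_{N\to\infty}\frac1N\sum_{n=0}^{N-1}P^nf=f_*\|f\|$ for all $f\in L^1_+$. The support of $f$ is $\operatorname{supp} f=\{x: f(x)\neq0\}$ (up to null sets). *)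

theory Defs
  imports "HOL-Analysis.Analysis"
begin

text \<open>Elements of L^1 are represented by integrable real functions (modulo a.e. equality);
  an operator on L^1 is a map on real functions that respects a.e. equality.\<close>

definition L1_plus :: "'a measure \<Rightarrow> ('a \<Rightarrow> real) \<Rightarrow> bool" where
  "L1_plus M f \<longleftrightarrow> integrable M f \<and> (AE x in M. 0 \<le> f x)"

definition density_on :: "'a measure \<Rightarrow> ('a \<Rightarrow> real) \<Rightarrow> bool" where
  "density_on M f \<longleftrightarrow> L1_plus M f \<and> integral\<^sup>L M f = 1"

definition stochastic_op :: "'a measure \<Rightarrow> (('a \<Rightarrow> real) \<Rightarrow> ('a \<Rightarrow> real)) \<Rightarrow> bool" where
  "stochastic_op M P \<longleftrightarrow>
     (\<forall>f. integrable M f \<longrightarrow> integrable M (P f)) \<and>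
     (\<forall>f g. integrable M f \<and> integrable M g \<and> (AE x in M. f x = g x)
            \<longrightarrow> (AE x in M. P f x = P g x)) \<and>
     (\<forall>f g (a::real) (b::real). integrable M f \<and> integrable M g
            \<longrightarrow> (AE x in M. P (\<lambda>y. a * f y + b * g y) x = a * P f x + b * P g x)) \<and>
     (\<forall>f. density_on M f \<longrightarrow> density_on M (P f))"

definition uniquely_mean_ergodic ::
  "'a measure \<Rightarrow> (('a \<Rightarrow> real) \<Rightarrow> ('a \<Rightarrow> real)) \<Rightarrow> ('a \<Rightarrow> real) \<Rightarrow> bool" where
  "uniquely_mean_ergodic M P fstar \<longleftrightarrow>
     density_on M fstar \<and> (AE x in M. P fstar x = fstar x) \<and>
     (\<forall>f. L1_plus M f \<longrightarrow>
        ((\<lambda>N::nat. \<integral>x. \<bar>(1 / real N) * (\<Sum>n<N. (P ^^ n) f x) - fstar x * integral\<^sup>L M f\<bar> \<partial>M)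
          \<longlonglongrightarrow> 0))"

text \<open>Subinvariance of a nonnegative measurable (extended-valued) function, using the
  monotone extension Pf = sup_n P f_n for f = sup_n f_n, 0 \<le> f_n \<le> f_(n+1), f_n in L^1_+.\<close>
definition subinvariant ::
  "'a measure \<Rightarrow> (('a \<Rightarrow> real) \<Rightarrow> ('a \<Rightarrow> real)) \<Rightarrow> ('a \<Rightarrow> ennreal) \<Rightarrow> bool" where
  "subinvariant M P ft \<longleftrightarrow>
     (\<forall>fn :: nat \<Rightarrow> 'a \<Rightarrow> real.
        (\<forall>n. L1_plus M (fn n)) \<and> (AE x in M. incseq (\<lambda>n. fn n x)) \<and>
        (AE x in M. ft x = (SUP n. ennreal (fn n x)))
        \<longrightarrow> (AE x in M. (SUP n. ennreal (P (fn n) x)) \<le> ft x))"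

end

theory Submission imports Defs begin

lemma P_zero:
  assumes "stochastic_op M P"
  shows "AE x in M. P (\<lambda>_. 0) x = 0"
proof -
  have "AE x in M. P (\<lambda>y. 0 * (0::real) + 0 * 0) x = 0 * P (\<lambda>_. 0) x + 0 * P (\<lambda>_. 0) x"
    using assms unfolding stochastic_op_def by blast
  then show ?thesis by simp
qed

lemma P_diff:
  assumes "stochastic_op M P" "integrable M f" "integrable M g"
  shows "AE x in M. P (\<lambda>y. g y - f y) x = P g x - P f x"
proof -
  have "AE x in M. P (\<lambda>y. 1 * g y + (-1) * f y) x = 1 * P g x + (-1) * P f x"
    using assms unfolding stochastic_op_def by blast
  then show ?thesis by simp
qed

lemma P_pos:
  assumes "stochastic_op M P" "L1_plus M f"
  shows "AE x in M. 0 \<le> P f x"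
proof (cases "integral\<^sup>L M f = 0")
  case True
  have i: "integrable M f" and nn: "AE x in M. 0 \<le> f x" using assms(2) unfolding L1_plus_def by auto
  have "AE x in M. f x = 0" using integral_nonneg_eq_0_iff_AE[OF i] nn True by auto
  then have "AE x in M. P f x = P (\<lambda>_. 0) x" using assms(1) i unfolding stochastic_op_def by auto
  then show ?thesis using P_zero[OF assms(1)] by eventually_elim simp
next
  case False
  have i: "integrable M f" and nn: "AE x in M. 0 \<le> f x" using assms(2) unfolding L1_plus_def by auto
  define c where "c = integral\<^sup>L M f"
  have "c \<ge> 0" unfolding c_def using integral_nonneg_AE[OF nn] .
  with False have cpos: "c > 0" unfolding c_def by auto
  have "density_on M (\<lambda>y. (1/c) * f y + 0 * f y)"
    unfolding density_on_def L1_plus_def using i nn cpos by (auto simp: c_def)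
  then have "AE x in M. 0 \<le> P (\<lambda>y. (1/c) * f y + 0 * f y) x"
    using assms(1) unfolding stochastic_op_def density_on_def L1_plus_def by blast
  moreover have "AE x in M. P (\<lambda>y. (1/c) * f y + 0 * f y) x = (1/c) * P f x + 0 * P f x"
    using assms(1) i unfolding stochastic_op_def by blast
  ultimately show ?thesis by eventually_elim (use cpos in \<open>simp add: zero_le_divide_iff\<close>)
qed

lemma P_mono:
  assumes "stochastic_op M P" "integrable M f" "integrable M g" "AE x in M. f x \<le> g x"
  shows "AE x in M. P f x \<le> P g x"
proof -
  have "L1_plus M (\<lambda>y. g y - f y)" unfolding L1_plus_def using assms by auto
  from P_pos[OF assms(1) this] P_diff[OF assms(1-3)] show ?thesis by eventually_elim simp
qed

lemma Pk_int:
  assumes "stochastic_op M P" "integrable M f"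
  shows "integrable M ((P ^^ k) f)"
  using assms by (induction k) (auto simp: stochastic_op_def)

lemma Pk_mono:
  assumes "stochastic_op M P" "integrable M f" "integrable M g" "AE x in M. f x \<le> g x"
  shows "AE x in M. (P ^^ k) f x \<le> (P ^^ k) g x"
proof (induction k)
  case 0 then show ?case using assms by simp
next
  case (Suc k)
  then show ?case using P_mono[OF assms(1) Pk_int[OF assms(1,2)] Pk_int[OF assms(1,3)]] by simp
qed

lemma Pk_L1:
  assumes "stochastic_op M P" "L1_plus M f"
  shows "L1_plus M ((P ^^ k) f)"
  using assms
proof (induction k)
  case 0 then show ?case by simp
next
  case (Suc k)
  then have "L1_plus M ((P ^^ k) f)" by simp
  then show ?case using P_pos[OF assms(1)] assms(1) unfolding L1_plus_def stochastic_op_def by auto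
qed

definition validseq where
  "validseq M ft fn \<longleftrightarrow> (\<forall>n. L1_plus M (fn n)) \<and> (AE x in M. incseq (\<lambda>n. fn n x)) \<and>
        (AE x in M. ft x = (SUP n. ennreal (fn n x)))"

lemma valid_le:
  assumes "validseq M ft fn"
  shows "AE x in M. \<forall>n. ennreal (fn n x) \<le> ft x"
proof -
  have "AE x in M. ft x = (SUP n. ennreal (fn n x))" using assms unfolding validseq_def by auto
  then show ?thesis by eventually_elim (metis SUP_upper UNIV_I)
qed

lemma iter_sub:
  assumes P: "stochastic_op M P" and sub: "subinvariant M P ft"
  shows "validseq M ft fn \<Longrightarrow> AE x in M. \<forall>n. ennreal ((P ^^ k) (fn n) x) \<le> ft x"
proof (induction k arbitrary: fn)
  case 0 then show ?case using valid_le by simp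
next
  case (Suc k)
  have L: "\<And>n. L1_plus M (fn n)" and inc: "AE x in M. incseq (\<lambda>n. fn n x)"
    and sup: "AE x in M. ft x = (SUP n. ennreal (fn n x))"
    using Suc.prems unfolding validseq_def by auto
  have int: "\<And>n. integrable M (fn n)" using L unfolding L1_plus_def by auto
  have s1: "AE x in M. (SUP n. ennreal (P (fn n) x)) \<le> ft x"
    using sub Suc.prems unfolding subinvariant_def validseq_def by blast
  have s1': "AE x in M. \<forall>n. ennreal (P (fn n) x) \<le> ft x"
    using s1 by eventually_elim (metis SUP_upper UNIV_I order_trans)
  define g where "g = (\<lambda>n x. max (P (fn n) x) (fn n x))"
  have intP: "\<And>n. integrable M (P (fn n))" using P int unfolding stochastic_op_def by auto
  have Lg: "\<And>n. L1_plus M (g n)"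
  proof -
    fix n
    have "AE x in M. 0 \<le> fn n x" using L unfolding L1_plus_def by auto
    then have "AE x in M. 0 \<le> g n x" by eventually_elim (simp add: g_def)
    then show "L1_plus M (g n)" using int intP unfolding g_def L1_plus_def by (auto intro!: integrable_max)
  qed
  have "\<And>n. AE x in M. fn n x \<le> fn (Suc n) x" using inc by (auto elim!: eventually_mono simp: incseq_Suc_iff)
  then have "\<And>n. AE x in M. P (fn n) x \<le> P (fn (Suc n)) x" using P_mono[OF P int int] by blast
  then have "AE x in M. \<forall>n. P (fn n) x \<le> P (fn (Suc n)) x" by (simp add: AE_all_countable)
  then have incg: "AE x in M. incseq (\<lambda>n. g n x)" using inc
    unfolding incseq_Suc_iff g_def by eventually_elim (metis max.mono)
  have supg: "AE x in M. ft x = (SUP n. ennreal (g n x))"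
    using sup s1' valid_le[OF Suc.prems]
  proof eventually_elim
    case (elim x)
    have "(SUP n. ennreal (g n x)) \<le> ft x"
    proof (rule SUP_least)
      fix n
      show "ennreal (g n x) \<le> ft x"
        using elim(2,3) by (cases "P (fn n) x \<le> fn n x") (auto simp: g_def max_def)
    qed
    moreover have "ft x \<le> (SUP n. ennreal (g n x))"
      unfolding elim(1) by (intro SUP_mono) (metis g_def ennreal_leI max.cobounded2 UNIV_I)
    ultimately show ?case by simp
  qed
  have vg: "validseq M ft g" unfolding validseq_def using Lg incg supg by auto
  have intg: "\<And>n. integrable M (g n)" using Lg unfolding L1_plus_def by auto
  have "\<And>n. AE x in M. (P ^^ k) (P (fn n)) x \<le> (P ^^ k) (g n) x"
    using Pk_mono[OF P intP intg] unfolding g_def by auto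
  then have "AE x in M. \<forall>n. (P ^^ k) (P (fn n)) x \<le> (P ^^ k) (g n) x" by (simp add: AE_all_countable)
  then show ?case using Suc.IH[OF vg]
  proof eventually_elim
    case (elim x)
    show ?case
    proof
      fix n
      have "ennreal ((P ^^ Suc k) (fn n) x) \<le> ennreal ((P ^^ k) (g n) x)"
      proof -
        have "(P ^^ Suc k) (fn n) = (P ^^ k) (P (fn n))" by (simp only: funpow_Suc_right o_apply)
        then show ?thesis using elim(1) by (metis ennreal_leI)
      qed
      then show "ennreal ((P ^^ Suc k) (fn n) x) \<le> ft x" using elim(2) order_trans by blast
    qed
  qed
qed

lemma exists_valid:
  assumes sf: "sigma_finite_measure M" and ftm[measurable]: "ft \<in> borel_measurable M"
  shows "\<exists>fn. validseq M ft fn"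
proof -
  obtain h where hm[measurable]: "h \<in> borel_measurable M" and hfin: "integral\<^sup>N M h \<noteq> \<infinity>"
    and hpos: "\<And>x. x \<in> space M \<Longrightarrow> 0 < h x \<and> h x < \<infinity>"
    using sigma_finite_measure.Ex_finite_integrable_function[OF sf] by blast
  define fn where "fn = (\<lambda>(n::nat) x. enn2real (min (ft x) (of_nat n * h x)))"
  have fin: "\<And>n x. x \<in> space M \<Longrightarrow> min (ft x) (of_nat n * h x) < top"
  proof -
    fix n x assume "x \<in> space M"
    then have "of_nat n * h x < top" using hpos by (simp add: ennreal_mult_less_top of_nat_less_top)
    then show "min (ft x) (of_nat n * h x) < top" by (simp add: min_less_iff_disj)
  qed
  have e: "\<And>n x. x \<in> space M \<Longrightarrow> ennreal (fn n x) = min (ft x) (of_nat n * h x)"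
    unfolding fn_def using fin by (simp add: ennreal_enn2real)
  have fnm[measurable]: "\<And>n. fn n \<in> borel_measurable M" unfolding fn_def by measurable
  have L: "\<And>n. L1_plus M (fn n)"
  proof -
    fix n
    have "(\<integral>\<^sup>+x. ennreal (fn n x) \<partial>M) = (\<integral>\<^sup>+x. min (ft x) (of_nat n * h x) \<partial>M)"
      by (rule nn_integral_cong) (simp add: e)
    also have "\<dots> \<le> (\<integral>\<^sup>+x. of_nat n * h x \<partial>M)" by (intro nn_integral_mono) simp
    also have "\<dots> = of_nat n * integral\<^sup>N M h" by (simp add: nn_integral_cmult)
    also have "\<dots> < \<infinity>" using hfin by (simp add: ennreal_mult_less_top less_top of_nat_less_top)
    finally have "(\<integral>\<^sup>+x. ennreal (fn n x) \<partial>M) < \<infinity>" .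
    then show "L1_plus M (fn n)" unfolding L1_plus_def
      by (auto intro!: integrableI_nonneg simp: fn_def)
  qed
  have inc: "AE x in M. incseq (\<lambda>n. fn n x)"
  proof (rule AE_I2)
    fix x assume x: "x \<in> space M"
    show "incseq (\<lambda>n. fn n x)"
    proof (rule incseq_SucI)
      fix n
      have "min (ft x) (of_nat n * h x) \<le> min (ft x) (of_nat (Suc n) * h x)"
        by (intro min.mono order.refl mult_right_mono) auto
      then show "fn n x \<le> fn (Suc n) x" unfolding fn_def using fin[OF x, of "Suc n"] by (intro enn2real_mono) auto
    qed
  qed
  have sup: "AE x in M. ft x = (SUP n. ennreal (fn n x))"
  proof (rule AE_I2)
    fix x assume x: "x \<in> space M"
    have "(SUP n. of_nat n * h x) = (SUP n. of_nat n :: ennreal) * h x" by (simp add: SUP_mult_right_ennreal)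
    also have "\<dots> = top" using hpos[OF x] by (auto simp add: ennreal_SUP_of_nat_eq_top ennreal_top_mult)
    finally have t: "(SUP n. of_nat n * h x) = top" .
    have "(SUP n. ennreal (fn n x)) = (SUP n. inf (ft x) (of_nat n * h x))" using e[OF x] by (simp add: inf_min)
    also have "\<dots> = inf (ft x) (SUP n. of_nat n * h x)" by (simp add: inf_SUP)
    also have "\<dots> = ft x" unfolding t by simp
    finally show "ft x = (SUP n. ennreal (fn n x))" by simp
  qed
  show ?thesis unfolding validseq_def using L inc sup by blast
qed

lemma cesaro_bound:
  assumes P: "stochastic_op M P" and ume: "uniquely_mean_ergodic M P fstar"
    and g: "L1_plus M g"
    and bnd: "AE x in M. \<forall>k. ennreal ((P ^^ k) g x) \<le> ft x"
  shows "AE x in M. ft x < \<infinity> \<longrightarrow> fstar x * integral\<^sup>L M g \<le> enn2real (ft x)"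
proof -
  define c where "c = integral\<^sup>L M g"
  define u where "u = (\<lambda>(N::nat) x. (1 / real N) * (\<Sum>n<N. (P ^^ n) g x) - fstar x * c)"
  have gi: "integrable M g" using g unfolding L1_plus_def by auto
  have fi: "integrable M fstar" using ume unfolding uniquely_mean_ergodic_def density_on_def L1_plus_def by auto
  have ui: "\<And>N. integrable M (u N)" unfolding u_def
    using Pk_int[OF P gi] fi by (auto intro!: integrable_diff integrable_mult_right integrable_sum integrable_mult_left)
  have lim: "(\<lambda>N. \<integral>x. norm (u N x) \<partial>M) \<longlonglongrightarrow> 0"
    using ume g unfolding uniquely_mean_ergodic_def u_def c_def real_norm_def by blast
  obtain r :: "nat \<Rightarrow> nat" where r: "strict_mono r" and ae: "AE x in M. (\<lambda>m. u (r m) x) \<longlonglongrightarrow> 0"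
    using tendsto_L1_AE_subseq[OF ui lim] by blast
  show ?thesis using ae bnd
  proof eventually_elim
    case (elim x)
    show ?case
    proof
      assume "ft x < \<infinity>"
      then obtain t where t: "ft x = ennreal t" "0 \<le> t" by (cases "ft x") auto
      have et: "enn2real (ft x) = t" using t by simp
      have pk: "\<And>k. (P ^^ k) g x \<le> t" using elim(2) t by (simp add: ennreal_le_iff)
      have avg: "\<forall>m\<ge>1. (1 / real (r m)) * (\<Sum>n<r m. (P ^^ n) g x) \<le> t"
      proof (intro allI impI)
        fix m :: nat assume "1 \<le> m"
        then have pos: "real (r m) > 0" using seq_suble[OF r, of m] by simp
        have "(\<Sum>n<r m. (P ^^ n) g x) \<le> of_nat (card {..<r m}) * t"
          by (rule sum_bounded_above) (use pk in auto)
        then have "(\<Sum>n<r m. (P ^^ n) g x) \<le> real (r m) * t" by simp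
        then show "(1 / real (r m)) * (\<Sum>n<r m. (P ^^ n) g x) \<le> t" using pos
          by (simp add: field_simps)
      qed
      have "(\<lambda>m. u (r m) x + fstar x * c) \<longlonglongrightarrow> 0 + fstar x * c"
        using elim(1) by (intro tendsto_add) auto
      then have "(\<lambda>m. (1 / real (r m)) * (\<Sum>n<r m. (P ^^ n) g x)) \<longlonglongrightarrow> fstar x * c"
        by (simp add: u_def)
      then have "fstar x * c \<le> t" using avg by (intro LIMSEQ_le_const2) auto
      then show "fstar x * integral\<^sup>L M g \<le> enn2real (ft x)" using et c_def by simp
    qed
  qed
qed

lemma AE_pick:
  assumes "emeasure M S > 0" "S \<subseteq> space M" "AE x in M. Q x"
  shows "\<exists>x\<in>S. Q x"
proof (rule ccontr)
  assume nt: "\<not> (\<exists>x\<in>S. Q x)"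
  obtain N where N: "N \<in> null_sets M" "{x\<in>space M. \<not> Q x} \<subseteq> N"
    using assms(3) unfolding eventually_ae_filter by blast
  have "S \<subseteq> N" using nt assms(2) N(2) by blast
  then have "emeasure M S \<le> emeasure M N" using N(1) by (intro emeasure_mono) auto
  moreover have "emeasure M N = 0" using N(1) by auto
  ultimately show False using assms(1) by simp
qed

theorem proposition2p1:
  fixes M :: "'a measure" and P :: "('a \<Rightarrow> real) \<Rightarrow> ('a \<Rightarrow> real)"
    and fstar :: "'a \<Rightarrow> real" and ft :: "'a \<Rightarrow> ennreal"
  assumes "sigma_finite_measure M"
    and "stochastic_op M P"
    and "uniquely_mean_ergodic M P fstar"
    and "ft \<in> borel_measurable M"
    and "subinvariant M P ft"
    and "emeasure M {x \<in> space M. fstar x \<noteq> 0 \<and> ft x < \<infinity>} > 0"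
  shows "(\<integral>\<^sup>+ x. ft x \<partial>M) < \<infinity>"
proof -
  obtain fn where v: "validseq M ft fn" using exists_valid[OF assms(1,4)] by blast
  have L: "\<And>n. L1_plus M (fn n)" and inc: "AE x in M. incseq (\<lambda>n. fn n x)"
    and sup: "AE x in M. ft x = (SUP n. ennreal (fn n x))"
    using v unfolding validseq_def by auto
  have "\<And>k. AE x in M. \<forall>n. ennreal ((P ^^ k) (fn n) x) \<le> ft x"
    using iter_sub[OF assms(2,5) v] by blast
  then have "AE x in M. \<forall>k n. ennreal ((P ^^ k) (fn n) x) \<le> ft x" by (simp add: AE_all_countable)
  then have "\<And>n. AE x in M. \<forall>k. ennreal ((P ^^ k) (fn n) x) \<le> ft x" by (auto elim!: eventually_mono)
  then have "\<And>n. AE x in M. ft x < \<infinity> \<longrightarrow> fstar x * integral\<^sup>L M (fn n) \<le> enn2real (ft x)"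
    using cesaro_bound[OF assms(2,3) L] by blast
  then have A: "AE x in M. \<forall>n. ft x < \<infinity> \<longrightarrow> fstar x * integral\<^sup>L M (fn n) \<le> enn2real (ft x)"
    by (subst AE_all_countable) blast
  have fnn: "AE x in M. 0 \<le> fstar x"
    using assms(3) unfolding uniquely_mean_ergodic_def density_on_def L1_plus_def by auto
  obtain x where x: "x \<in> {x \<in> space M. fstar x \<noteq> 0 \<and> ft x < \<infinity>}"
    and xA: "\<forall>n. ft x < \<infinity> \<longrightarrow> fstar x * integral\<^sup>L M (fn n) \<le> enn2real (ft x)" and xf: "0 \<le> fstar x"
    using AE_pick[OF assms(6) _ AE_conjI[OF A fnn]] by blast
  have fpos: "fstar x > 0" using x xf by auto
  define C where "C = enn2real (ft x) / fstar x"
  have bnd: "\<And>n. integral\<^sup>L M (fn n) \<le> C"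
    using xA x fpos unfolding C_def by (simp add: field_simps mult.commute)
  have int: "\<And>n. integrable M (fn n)" and nn: "\<And>n. AE x in M. 0 \<le> fn n x"
    using L unfolding L1_plus_def by auto
  have "(\<integral>\<^sup>+ x. ft x \<partial>M) = (\<integral>\<^sup>+ x. (SUP n. ennreal (fn n x)) \<partial>M)"
    using sup by (rule nn_integral_cong_AE)
  also have "\<dots> = (SUP n. \<integral>\<^sup>+ x. ennreal (fn n x) \<partial>M)"
  proof (rule nn_integral_monotone_convergence_SUP_AE)
    fix n show "AE x in M. ennreal (fn n x) \<le> ennreal (fn (Suc n) x)"
      using inc by eventually_elim (simp add: incseq_Suc_iff ennreal_leI)
    show "(\<lambda>x. ennreal (fn n x)) \<in> borel_measurable M" using int[of n] by measurable
  qed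
  also have "\<dots> = (SUP n. ennreal (integral\<^sup>L M (fn n)))"
    using nn_integral_eq_integral[OF int nn] by simp
  also have "\<dots> \<le> ennreal C" by (intro SUP_least ennreal_leI bnd)
  also have "\<dots> < \<infinity>" by simp
  finally show ?thesis .
qed

end
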